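(* Fix $q$ and, for each $D\ge1$, let $f_D:\mathbb{R}^q\to\mathbb{R}^D$ be a stochastic process whose Jacobian at every $x$ satisfies $J(x)\sim\mathcal{N}(\mathbb{E}[J(x)],I_D\otimes\Sigma(x))$ with $\Sigma(x)$ symmetric positive definite, and suppose there is $M\ge0$ independent of $D$ with $\omega_x(v)\le MD$ for all $x$, $v\neq0$, $D$. Then for all $x$ and $v\neq 0$, \[0\le\frac{\|v\|_{R,x}-\|v\|_{F,x}}{\|v\|_{R,x}}\le\frac{1+M}{D},\] so the relative difference between the Finsler norm and the expected Riemannian norm tends to $0$ as $D\to\infty$ at rate $O(1/D)$.
   Context: $\omega_x(v)=(v^{\top}\Sigma(x)v)^{-1}v^{\top}\mathbb{E}[J(x)]^{\top}\mathbb{E}[J(x)]v$; $G(x)=J(x)^{\top}J(x)$; $\|v\|_{F,x}=\mathbb{E}[\sqrt{v^{\top}G(x)v}]$ (Finsler norm), $\|v\|_{R,x}=\sqrt{v^{\top}\mathbb{E}[G(x)]v}$ (norm of the expected Riemannian metric). *)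

theory Defs
  imports "HOL-Probability.Probability"
begin

definition spd :: "real^'q^'q \<Rightarrow> bool" where
  "spd S \<longleftrightarrow> transpose S = S \<and> (\<forall>v. v \<noteq> 0 \<longrightarrow> v \<bullet> (S *v v) > 0)"

definition mvn_density :: "real^'q \<Rightarrow> real^'q^'q \<Rightarrow> real^'q \<Rightarrow> real" where
  "mvn_density mu S y =
     exp (- ((y - mu) \<bullet> (matrix_inv S *v (y - mu))) / 2)
     / sqrt ((2 * pi) ^ CARD('q) * det S)"

text \<open>Density of the matrix normal N(Mu, I_D \<otimes> S) for a D x q matrix (rows indexed by 'd):
  the rows are independent, row i being N(Mu$i, S).\<close>
definition matnormal_density :: "real^'q^'d \<Rightarrow> real^'q^'q \<Rightarrow> real^'q^'d \<Rightarrow> ennreal" where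
  "matnormal_density Mu S Y = ennreal (\<Prod>i\<in>UNIV. mvn_density (Mu $ i) S (Y $ i))"

definition Gmat :: "real^'q^'d \<Rightarrow> real^'q^'q" where
  "Gmat A = transpose A ** A"

definition omega :: "'w measure \<Rightarrow> ('w \<Rightarrow> real^'q^'d) \<Rightarrow> real^'q^'q \<Rightarrow> real^'q \<Rightarrow> real" where
  "omega M J S v = inverse (v \<bullet> (S *v v)) *
     (v \<bullet> ((transpose (integral\<^sup>L M J) ** integral\<^sup>L M J) *v v))"

definition finsler_norm :: "'w measure \<Rightarrow> ('w \<Rightarrow> real^'q^'d) \<Rightarrow> real^'q \<Rightarrow> real" where
  "finsler_norm M J v = integral\<^sup>L M (\<lambda>w. sqrt (v \<bullet> (Gmat (J w) *v v)))"

definition riem_norm :: "'w measure \<Rightarrow> ('w \<Rightarrow> real^'q^'d) \<Rightarrow> real^'q \<Rightarrow> real" where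
  "riem_norm M J v = sqrt (v \<bullet> (integral\<^sup>L M (\<lambda>w. Gmat (J w)) *v v))"

end

theory Submission
  imports Defs "HOL-Real_Asymp.Real_Asymp"
begin


definition cterm :: "real \<Rightarrow> nat \<Rightarrow> real" where
  "cterm y j = (if even j then y ^ j / fact j else 0)"

lemma fact_mult_le_fact_add: "fact j * fact m \<le> (fact (j + m) :: real)"
proof -
  have "fact m * fact j * ((j+m) choose m) = (fact (j+m) :: nat)"
    using binomial_fact_lemma[of m "j+m"] by simp
  moreover have "((j+m) choose m) \<ge> 1" using zero_less_binomial_iff[of "j+m" m] by linarith
  ultimately have "fact j * fact m * 1 \<le> (fact (j + m) :: nat)"
    by (metis mult.commute mult_le_mono2)
  then have "fact j * fact m \<le> (fact (j + m) :: nat)" by simp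
  then have "real (fact j * fact m) \<le> real (fact (j + m))" by (simp only: of_nat_le_iff)
  then show ?thesis by simp
qed

lemma cterm_nonneg: "cterm y j \<ge> 0"
  by (auto simp: cterm_def zero_le_even_power)

lemma cosh_tail:
  fixes y :: real assumes m: "even m"
  shows "y ^ m / fact m \<le> cosh y - (\<Sum>j<m. cterm y j)"
    and "cosh y - (\<Sum>j<m. cterm y j) \<le> y ^ m / fact m * cosh y"
proof -
  have s: "cterm y sums cosh y"
  proof -
    have "cterm y = (\<lambda>n. if even n then y ^ n /\<^sub>R fact n else 0)"
      by (rule ext) (simp add: cterm_def divide_simps)
    then show ?thesis using cosh_converges[of y] by simp
  qed
  have t: "(\<lambda>j. cterm y (j + m)) sums (cosh y - (\<Sum>j<m. cterm y j))"
    by (subst sums_iff_shift) (simp add: s)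
  have h0: "(\<lambda>j. if j = 0 then cterm y (j + m) else 0) sums cterm y (0 + m)"
    by (rule sums_single)
  have h1: "\<And>j. (if j = 0 then cterm y (j + m) else 0) \<le> cterm y (j + m)"
    using cterm_nonneg by auto
  have "cterm y (0 + m) \<le> cosh y - (\<Sum>j<m. cterm y j)"
    by (rule sums_le[OF h1 h0 t])
  then have "cterm y m \<le> cosh y - (\<Sum>j<m. cterm y j)" by simp
  then show "y ^ m / fact m \<le> cosh y - (\<Sum>j<m. cterm y j)"
    using m by (simp add: cterm_def)
  have u: "(\<lambda>j. y ^ m / fact m * cterm y j) sums (y ^ m / fact m * cosh y)"
    by (rule sums_mult[OF s])
  have "cterm y (j + m) \<le> y ^ m / fact m * cterm y j" for j
  proof (cases "even j")
    case True
    have ym: "y ^ m \<ge> 0" "y ^ j \<ge> 0" using m True by (auto simp: zero_le_even_power)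
    have "y ^ (j + m) / fact (j + m) \<le> y ^ (j+m) / (fact j * fact m)"
      using fact_mult_le_fact_add[of j m] ym
      by (intro divide_left_mono) (auto simp: power_add)
    also have "\<dots> = y ^ m / fact m * (y ^ j / fact j)" by (simp add: power_add ac_simps)
    finally show ?thesis using True m by (simp add: cterm_def)
  next
    case False
    then show ?thesis using m by (simp add: cterm_def)
  qed
  then show "cosh y - (\<Sum>j<m. cterm y j) \<le> y ^ m / fact m * cosh y"
    by (rule sums_le[OF _ t u])
qed

lemma cterm_vals: "cterm y 0 = 1" "cterm y 1 = 0" "cterm y 2 = y^2/2" "cterm y 3 = 0"
  "cterm y 4 = y^4/24" "cterm y 5 = 0"
proof -
  have f2: "fact 2 = (2::real)" and f4: "fact 4 = (24::real)" by (simp_all add: numeral_eq_Suc)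
  show "cterm y 0 = 1" "cterm y 1 = 0" "cterm y 2 = y^2/2" "cterm y 3 = 0"
  "cterm y 4 = y^4/24" "cterm y 5 = 0" by (simp_all add: cterm_def f2 f4)
qed

lemma cterm_sums:
  "(\<Sum>j<4. cterm y j) = 1 + y^2/2" "(\<Sum>j<6. cterm y j) = 1 + y^2/2 + y^4/24"
proof -
  have a: "(\<Sum>j<4. cterm y j) = cterm y 0 + cterm y 1 + cterm y 2 + cterm y 3"
    by (simp add: eval_nat_numeral)
  have b: "(\<Sum>j<6. cterm y j) = cterm y 0 + cterm y 1 + cterm y 2 + cterm y 3 + cterm y 4 + cterm y 5"
    by (simp add: eval_nat_numeral)
  show "(\<Sum>j<4. cterm y j) = 1 + y^2/2" "(\<Sum>j<6. cterm y j) = 1 + y^2/2 + y^4/24"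
    unfolding a b cterm_vals by simp_all
qed

lemma cterm_sum2: "(\<Sum>j<2. cterm y j) = 1"
  by (simp add: eval_nat_numeral cterm_def)

lemma cosh_pow_le: "even m \<Longrightarrow> y ^ m \<le> fact m * cosh (y::real)"
proof -
  assume m: "even m"
  have "y ^ m / fact m \<le> cosh y - (\<Sum>j<m. cterm y j)" by (rule cosh_tail(1)[OF m])
  also have "\<dots> \<le> cosh y" using cterm_nonneg by (simp add: sum_nonneg)
  finally show ?thesis by (simp add: divide_simps mult.commute)
qed

lemma cosh_R2: "y^4/24 \<le> cosh y - 1 - y^2/2" "cosh y - 1 - y^2/2 \<le> y^4/24 * cosh (y::real)"
  using cosh_tail[of 4 y] cterm_sums(1)[of y] by (simp_all add: fact_numeral)

lemma cosh_R3: "y^6/720 \<le> cosh y - 1 - y^2/2 - y^4/24" "cosh y - 1 - y^2/2 - y^4/24 \<le> y^6/720 * cosh (y::real)"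
proof -
  have f: "fact 6 = (720::real)" by (simp add: numeral_eq_Suc)
  show "y^6/720 \<le> cosh y - 1 - y^2/2 - y^4/24" "cosh y - 1 - y^2/2 - y^4/24 \<le> y^6/720 * cosh (y::real)"
    using cosh_tail[of 6 y] cterm_sums(2)[of y] by (simp_all add: f)
qed

lemma cosh_lo2: "y^2 \<le> 2 * (cosh (y::real) - 1)"
  using cosh_tail(1)[of 2 y] cterm_sum2[of y] by simp

lemma cosh_scale_le: "\<bar>t\<bar> \<le> 1 \<Longrightarrow> cosh (t * x) \<le> cosh (x::real)"
proof -
  assume "\<bar>t\<bar> \<le> 1"
  then have "\<bar>t * x\<bar> \<le> \<bar>x\<bar>" by (simp add: abs_mult mult_left_le_one_le)
  then have "cosh \<bar>t * x\<bar> \<le> cosh \<bar>x\<bar>"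
    using cosh_real_nonneg_le_iff[of "\<bar>t * x\<bar>" "\<bar>x\<bar>"] by simp
  then show ?thesis by simp
qed

lemma cosh_measurable[measurable]: "(cosh :: real \<Rightarrow> real) \<in> borel_measurable borel"
  by (intro borel_measurable_continuous_onI continuous_intros)

lemma squeeze_lim:
  fixes g :: "real \<Rightarrow> real"
  assumes b: "\<And>t. 0 < t \<Longrightarrow> t < 1 \<Longrightarrow> E \<le> g t \<and> g t \<le> E + t^2 * C"
    and L: "(g \<longlongrightarrow> L) (at_right 0)"
  shows "E = L"
proof -
  have ev: "eventually (\<lambda>t. t \<in> {0<..<1}) (at_right (0::real))"
    by (rule eventually_at_right_real) simp
  have "(g \<longlongrightarrow> E) (at_right 0)"
  proof (rule tendsto_sandwich[of "\<lambda>_. E" g _ "\<lambda>t. E + t^2 * C"])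
    show "eventually (\<lambda>t. E \<le> g t) (at_right 0)" using ev by eventually_elim (use b in auto)
    show "eventually (\<lambda>t. g t \<le> E + t^2 * C) (at_right 0)" using ev by eventually_elim (use b in auto)
    show "((\<lambda>_. E) \<longlongrightarrow> E) (at_right 0)" by simp
    have "((\<lambda>t. E + t^2 * C) \<longlongrightarrow> E + 0^2 * C) (at_right (0::real))"
      by (intro tendsto_intros)
    then show "((\<lambda>t. E + t^2 * C) \<longlongrightarrow> E) (at_right 0)" by simp
  qed
  then show ?thesis using L tendsto_unique trivial_limit_at_right_real by blast
qed

lemma mgf_moments:
  fixes X :: "'w \<Rightarrow> real"
  assumes P: "prob_space M" and Xm: "X \<in> borel_measurable M"
    and mi: "\<And>t. integrable M (\<lambda>w. exp (t * X w))"
    and mv: "\<And>t. (\<integral>w. exp (t * X w) \<partial>M) = exp (t*a + t^2*b/2)"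
  shows "integrable M (\<lambda>w. X w ^ 2)" "integrable M (\<lambda>w. X w ^ 4)"
    "(\<integral>w. X w ^ 2 \<partial>M) = b + a*a"
    "(\<integral>w. X w ^ 4 \<partial>M) = a*a*a*a + 6*a*a*b + 3*b*b"
proof -
  interpret prob_space M by (rule P)
  have ch: "cosh z = (exp z + exp (- z)) / 2" for z :: real by (simp add: cosh_field_def)
  have ci: "integrable M (\<lambda>w. cosh (t * X w))" for t
  proof -
    have "integrable M (\<lambda>w. exp ((-t) * X w))" by (rule mi)
    then have "integrable M (\<lambda>w. (exp (t * X w) + exp ((-t) * X w)) / 2)"
      using mi[of t] by simp
    then show ?thesis by (simp add: ch)
  qed
  have cv: "(\<integral>w. cosh (t * X w) \<partial>M) = cosh (t*a) * exp (t^2*b/2)" for t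
  proof -
    have "(\<integral>w. cosh (t * X w) \<partial>M) = (\<integral>w. (exp (t * X w) + exp ((-t) * X w)) / 2 \<partial>M)"
      by (simp add: ch)
    also have "\<dots> = ((\<integral>w. exp (t * X w) \<partial>M) + (\<integral>w. exp ((-t) * X w) \<partial>M)) / 2"
      using mi[of t] mi[of "-t"] by simp
    also have "\<dots> = (exp (t*a + t^2*b/2) + exp ((-t)*a + (-t)^2*b/2)) / 2" by (simp only: mv)
    also have "\<dots> = cosh (t*a) * exp (t^2*b/2)"
      by (simp add: ch exp_add[symmetric] field_simps)
    finally show ?thesis .
  qed
  have Xm': "(\<lambda>w. X w) \<in> borel_measurable M" using Xm by simp
  have K: "integrable M (\<lambda>w. cosh (2 * X w) + 1)" using ci by auto
  have coshsq: "cosh x * cosh x = (cosh (2*x) + 1) / 2" for x :: real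
    by (simp add: cosh_double_cosh power2_eq_square)
  have i2: "integrable M (\<lambda>w. X w ^ 2)"
  proof (rule Bochner_Integration.integrable_bound)
    show "integrable M (\<lambda>w. 2 * cosh (1 * X w))" using ci[of 1] by simp
    show "(\<lambda>w. X w ^ 2) \<in> borel_measurable M" using Xm by measurable
    show "AE w in M. norm (X w ^ 2) \<le> norm (2 * cosh (1 * X w))"
      using cosh_pow_le[of 2 "X _"] by (auto simp: fact_numeral)
  qed
  have i4: "integrable M (\<lambda>w. X w ^ 4)"
  proof (rule Bochner_Integration.integrable_bound)
    show "integrable M (\<lambda>w. 24 * cosh (1 * X w))" using ci[of 1] by simp
    show "(\<lambda>w. X w ^ 4) \<in> borel_measurable M" using Xm by measurable
    show "AE w in M. norm (X w ^ 4) \<le> norm (24 * cosh (1 * X w))"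
      using cosh_pow_le[of 4 "X _"] by (auto simp: fact_numeral)
  qed
  have iA: "integrable M (\<lambda>w. X w ^ 4 * cosh (X w))"
  proof (rule Bochner_Integration.integrable_bound)
    show "integrable M (\<lambda>w. 12 * (cosh (2 * X w) + 1))" by (rule integrable_mult_right[OF K])
    show "(\<lambda>w. X w ^ 4 * cosh (X w)) \<in> borel_measurable M" using Xm by measurable
    have "X w ^ 4 * cosh (X w) \<le> 12 * (cosh (2 * X w) + 1)" for w
    proof -
      have "X w ^ 4 * cosh (X w) \<le> (24 * cosh (X w)) * cosh (X w)"
        using cosh_pow_le[of 4 "X w"] by (intro mult_right_mono) (auto simp: fact_numeral)
      also have "\<dots> = 12 * (cosh (2 * X w) + 1)" using coshsq[of "X w"] by simp
      finally show ?thesis .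
    qed
    then show "AE w in M. norm (X w ^ 4 * cosh (X w)) \<le> norm (12 * (cosh (2 * X w) + 1))"
      by (auto simp: abs_mult intro!: add_nonneg_nonneg)
  qed
  have iB: "integrable M (\<lambda>w. X w ^ 6 * cosh (X w))"
  proof (rule Bochner_Integration.integrable_bound)
    show "integrable M (\<lambda>w. 360 * (cosh (2 * X w) + 1))" by (rule integrable_mult_right[OF K])
    show "(\<lambda>w. X w ^ 6 * cosh (X w)) \<in> borel_measurable M" using Xm by measurable
    have f6: "fact 6 = (720::real)" by (simp add: numeral_eq_Suc)
    have "X w ^ 6 * cosh (X w) \<le> 360 * (cosh (2 * X w) + 1)" for w
    proof -
      have "X w ^ 6 * cosh (X w) \<le> (720 * cosh (X w)) * cosh (X w)"
        using cosh_pow_le[of 6 "X w"] by (intro mult_right_mono) (auto simp: f6)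
      also have "\<dots> = 360 * (cosh (2 * X w) + 1)" using coshsq[of "X w"] by simp
      finally show ?thesis .
    qed
    then show "AE w in M. norm (X w ^ 6 * cosh (X w)) \<le> norm (360 * (cosh (2 * X w) + 1))"
      by (auto simp: abs_mult intro!: add_nonneg_nonneg)
  qed
  define E2 where "E2 = (\<integral>w. X w ^ 2 \<partial>M)"
  define E4 where "E4 = (\<integral>w. X w ^ 4 \<partial>M)"
  have E2: "E2 = b + a*a"
  proof (rule squeeze_lim)
    fix t :: real assume t: "0 < t" "t < 1"
    have int1: "(\<integral>w. 2 * (cosh (t * X w) - 1) / t^2 \<partial>M) = 2 * (cosh (t*a) * exp (t^2*b/2) - 1) / t^2"
      using ci[of t] by (simp add: cv prob_space)
    have lo: "X w ^ 2 \<le> 2 * (cosh (t * X w) - 1) / t^2" for w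
    proof -
      have "(t * X w)^2 \<le> 2 * (cosh (t * X w) - 1)" by (rule cosh_lo2)
      then have "t^2 * X w ^ 2 \<le> 2 * (cosh (t * X w) - 1)" by (simp add: power_mult_distrib)
      then show ?thesis using t by (simp add: le_divide_eq mult.commute)
    qed
    have up: "2 * (cosh (t * X w) - 1) / t^2 \<le> X w ^ 2 + t^2 * (X w ^ 4 * cosh (X w) / 12)" for w
    proof -
      have "cosh (t * X w) - 1 - (t * X w)^2/2 \<le> (t * X w)^4/24 * cosh (t * X w)" by (rule cosh_R2(2))
      also have "\<dots> \<le> (t * X w)^4/24 * cosh (X w)"
        using cosh_scale_le[of t "X w"] t by (intro mult_left_mono) auto
      finally have "2 * (cosh (t * X w) - 1) \<le> t^2 * (X w ^ 2 + t^2 * (X w ^ 4 * cosh (X w) / 12))"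
        by (simp add: power_mult_distrib algebra_simps)
      then show ?thesis using t by (simp add: divide_le_eq mult.commute)
    qed
    have f1: "E2 \<le> (\<integral>w. 2 * (cosh (t * X w) - 1) / t^2 \<partial>M)"
      unfolding E2_def using lo i2 ci[of t] by (intro integral_mono) auto
    have f2: "(\<integral>w. 2 * (cosh (t * X w) - 1) / t^2 \<partial>M) \<le> (\<integral>w. X w ^ 2 + t^2 * (X w ^ 4 * cosh (X w) / 12) \<partial>M)"
      using up i2 ci[of t] iA by (intro integral_mono) auto
    have f3: "(\<integral>w. X w ^ 2 + t^2 * (X w ^ 4 * cosh (X w) / 12) \<partial>M) = E2 + t^2 * (\<integral>w. X w ^ 4 * cosh (X w) / 12 \<partial>M)"
      unfolding E2_def using i2 iA by simp
    show "E2 \<le> 2 * (cosh (t*a) * exp (t^2*b/2) - 1) / t^2 \<and>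
        2 * (cosh (t*a) * exp (t^2*b/2) - 1) / t^2 \<le> E2 + t^2 * (\<integral>w. X w ^ 4 * cosh (X w) / 12 \<partial>M)"
      unfolding int1[symmetric] using f1 f2 f3 by linarith
  next
    show "((\<lambda>t::real. 2*(cosh(t*a)*exp(t^2*b/2)-1)/t^2) \<longlongrightarrow> b + a*a) (at_right 0)"
      by real_asymp
  qed
  have E4: "E4 = a*a*a*a + 6*a*a*b + 3*b*b"
  proof (rule squeeze_lim)
    fix t :: real assume t: "0 < t" "t < 1"
    have int1: "(\<integral>w. 24 * (cosh (t * X w) - 1 - t^2 * X w ^ 2 / 2) / t^4 \<partial>M)
       = 24 * (cosh (t*a) * exp (t^2*b/2) - 1 - t^2*(a*a+b)/2) / t^4"
      using ci[of t] i2 E2 unfolding E2_def by (simp add: cv prob_space algebra_simps)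
    have lo: "X w ^ 4 \<le> 24 * (cosh (t * X w) - 1 - t^2 * X w ^ 2 / 2) / t^4" for w
    proof -
      have "(t * X w)^4/24 \<le> cosh (t * X w) - 1 - (t * X w)^2/2" by (rule cosh_R2(1))
      then have "t^4 * X w ^ 4 \<le> 24 * (cosh (t * X w) - 1 - t^2 * X w ^ 2 / 2)"
        by (simp add: power_mult_distrib)
      then show ?thesis using t by (simp add: le_divide_eq mult.commute)
    qed
    have up: "24 * (cosh (t * X w) - 1 - t^2 * X w ^ 2 / 2) / t^4 \<le> X w ^ 4 + t^2 * (X w ^ 6 * cosh (X w) / 30)" for w
    proof -
      have "cosh (t * X w) - 1 - (t * X w)^2/2 - (t * X w)^4/24 \<le> (t * X w)^6/720 * cosh (t * X w)" by (rule cosh_R3(2))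
      also have "\<dots> \<le> (t * X w)^6/720 * cosh (X w)"
        using cosh_scale_le[of t "X w"] t by (intro mult_left_mono) auto
      finally have "24 * (cosh (t * X w) - 1 - t^2 * X w ^ 2 / 2) \<le> t^4 * (X w ^ 4 + t^2 * (X w ^ 6 * cosh (X w) / 30))"
        by (simp add: power_mult_distrib algebra_simps)
      then show ?thesis using t by (simp add: divide_le_eq mult.commute)
    qed
    have f1: "E4 \<le> (\<integral>w. 24 * (cosh (t * X w) - 1 - t^2 * X w ^ 2 / 2) / t^4 \<partial>M)"
      unfolding E4_def using lo i4 i2 ci[of t] by (intro integral_mono) auto
    have f2: "(\<integral>w. 24 * (cosh (t * X w) - 1 - t^2 * X w ^ 2 / 2) / t^4 \<partial>M) \<le> (\<integral>w. X w ^ 4 + t^2 * (X w ^ 6 * cosh (X w) / 30) \<partial>M)"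
      using up i4 i2 ci[of t] iB by (intro integral_mono) auto
    have f3: "(\<integral>w. X w ^ 4 + t^2 * (X w ^ 6 * cosh (X w) / 30) \<partial>M) = E4 + t^2 * (\<integral>w. X w ^ 6 * cosh (X w) / 30 \<partial>M)"
      unfolding E4_def using i4 iB by simp
    show "E4 \<le> 24 * (cosh (t*a) * exp (t^2*b/2) - 1 - t^2*(a*a+b)/2) / t^4 \<and>
        24 * (cosh (t*a) * exp (t^2*b/2) - 1 - t^2*(a*a+b)/2) / t^4 \<le> E4 + t^2 * (\<integral>w. X w ^ 6 * cosh (X w) / 30 \<partial>M)"
      unfolding int1[symmetric] using f1 f2 f3 by linarith
  next
    show "((\<lambda>t::real. 24*(cosh(t*a)*exp(t^2*b/2)-1 - t^2*(a*a+b)/2)/t^4) \<longlongrightarrow> a*a*a*a+6*a*a*b+3*b*b) (at_right 0)"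
      by (real_asymp simp: algebra_simps)
  qed
  show "integrable M (\<lambda>w. X w ^ 2)" by (rule i2)
  show "integrable M (\<lambda>w. X w ^ 4)" by (rule i4)
  show "(\<integral>w. X w ^ 2 \<partial>M) = b + a*a" using E2 E2_def by simp
  show "(\<integral>w. X w ^ 4 \<partial>M) = a*a*a*a + 6*a*a*b + 3*b*b" using E4 E4_def by simp
qed



lemma spd_invertible:
  fixes S :: "real^'q^'q" assumes "spd S"
  shows "S ** matrix_inv S = mat 1" "matrix_inv S ** S = mat 1" "transpose S = S"
proof -
  have inj: "\<forall>x. S *v x = 0 \<longrightarrow> x = 0"
    using assms unfolding spd_def by (metis inner_zero_right less_irrefl)
  then have "\<exists>B. B ** S = mat 1" using matrix_left_invertible_ker by blast
  then have "invertible S" using invertible_left_inverse by blast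
  then have "\<exists>A'. S ** A' = mat 1 \<and> A' ** S = mat 1" unfolding invertible_def by blast
  then have "S ** matrix_inv S = mat 1 \<and> matrix_inv S ** S = mat 1"
    unfolding matrix_inv_def by (rule someI_ex)
  then show "S ** matrix_inv S = mat 1" "matrix_inv S ** S = mat 1" by auto
  show "transpose S = S" using assms unfolding spd_def by auto
qed

lemma inner_mat_left: "((A :: real^'n^'m) *v x) \<bullet> y = x \<bullet> (transpose A *v y)"
  by (metis dot_lmul_matrix vector_transpose_matrix)

lemma mvn_shift:
  fixes S :: "real^'q^'q" assumes "spd S"
  shows "mvn_density mu S y * exp (y \<bullet> t) =
         exp (mu \<bullet> t + t \<bullet> (S *v t) / 2) * mvn_density (mu + S *v t) S y"
proof -
  define P where "P = matrix_inv S"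
  have PS: "P ** S = mat 1" and SP: "S ** P = mat 1" and ST: "transpose S = S"
    using spd_invertible[OF assms] unfolding P_def by auto
  define z where "z = y - mu"
  define u where "u = S *v t"
  have Pu: "P *v u = t" unfolding u_def by (simp add: matrix_vector_mul_assoc PS)
  have uPz: "u \<bullet> (P *v z) = t \<bullet> z"
    unfolding u_def inner_mat_left ST by (simp add: matrix_vector_mul_assoc SP)
  have key: "(z - u) \<bullet> (P *v (z - u)) = z \<bullet> (P *v z) - 2 * (z \<bullet> t) + t \<bullet> u"
    by (simp add: matrix_vector_mult_diff_distrib inner_diff_left inner_diff_right Pu uPz inner_commute)
  have e: "- ((y - mu) \<bullet> (P *v (y - mu))) / 2 + y \<bullet> t
      = (mu \<bullet> t + t \<bullet> (S *v t) / 2) + - ((y - (mu + S *v t)) \<bullet> (P *v (y - (mu + S *v t)))) / 2"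
  proof -
    have h1: "y - (mu + S *v t) = z - u" unfolding z_def u_def by simp
    have h2: "y \<bullet> t = z \<bullet> t + mu \<bullet> t" unfolding z_def by (simp add: inner_diff_left)
    have h3: "t \<bullet> (S *v t) = t \<bullet> u" unfolding u_def ..
    show ?thesis unfolding h1 h3 key h2 z_def[symmetric] by (simp add: field_simps)
  qed
  have ex: "exp (- ((y - mu) \<bullet> (P *v (y - mu))) / 2) * exp (y \<bullet> t) = exp (mu \<bullet> t + t \<bullet> (S *v t) / 2) * exp (- ((y - (mu + S *v t)) \<bullet> (P *v (y - (mu + S *v t)))) / 2)"
    by (simp only: mult_exp_exp e)
  define K where "K = sqrt ((2 * pi) ^ CARD('q) * det S)"
  have "mvn_density mu S y * exp (y \<bullet> t) = (exp (- ((y - mu) \<bullet> (P *v (y - mu))) / 2) * exp (y \<bullet> t)) / K"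
    unfolding mvn_density_def P_def[symmetric] K_def by simp
  also have "\<dots> = exp (mu \<bullet> t + t \<bullet> (S *v t) / 2) * (exp (- ((y - (mu + S *v t)) \<bullet> (P *v (y - (mu + S *v t)))) / 2) / K)"
    unfolding ex by simp
  also have "\<dots> = exp (mu \<bullet> t + t \<bullet> (S *v t) / 2) * mvn_density (mu + S *v t) S y"
    unfolding mvn_density_def P_def[symmetric] K_def by simp
  finally show ?thesis .
qed

lemma matnormal_shift:
  fixes S :: "real^'q^'q" and Mu Y T :: "real^'q^'d"
  assumes "spd S"
  shows "matnormal_density Mu S Y * ennreal (exp (Y \<bullet> T)) =
    ennreal (exp (Mu \<bullet> T + (\<Sum>i\<in>UNIV. T$i \<bullet> (S *v T$i)) / 2)) *
    matnormal_density (Mu + (\<chi> i. S *v T$i)) S Y"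
proof -
  have "(\<Prod>i\<in>UNIV. mvn_density (Mu $ i) S (Y $ i)) * exp (Y \<bullet> T)
      = (\<Prod>i\<in>UNIV. mvn_density (Mu $ i) S (Y $ i) * exp (Y $ i \<bullet> T $ i))"
    by (simp add: inner_vec_def[of Y T] exp_sum prod.distrib)
  also have "\<dots> = (\<Prod>i\<in>UNIV. exp (Mu $ i \<bullet> T $ i + T $ i \<bullet> (S *v T $ i) / 2) * mvn_density (Mu $ i + S *v T $ i) S (Y $ i))"
    by (simp add: mvn_shift[OF assms])
  also have "\<dots> = exp (Mu \<bullet> T + (\<Sum>i\<in>UNIV. T$i \<bullet> (S *v T$i)) / 2) *
      (\<Prod>i\<in>UNIV. mvn_density ((Mu + (\<chi> i. S *v T$i)) $ i) S (Y $ i))"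
  proof -
    have c: "(\<Sum>i\<in>UNIV. Mu $ i \<bullet> T $ i + T $ i \<bullet> (S *v T $ i) / 2) = Mu \<bullet> T + (\<Sum>i\<in>UNIV. T$i \<bullet> (S *v T$i)) / 2"
      by (simp only: inner_vec_def[of Mu T] sum.distrib sum_divide_distrib)
    show ?thesis
      by (simp only: prod.distrib vector_add_component vec_lambda_beta) (simp add: exp_sum[symmetric] c)
  qed
  finally have eq: "(\<Prod>i\<in>UNIV. mvn_density (Mu $ i) S (Y $ i)) * exp (Y \<bullet> T) = \<dots>" .
  show ?thesis
    unfolding matnormal_density_def
    by (simp add: ennreal_mult''[symmetric] ennreal_mult'[symmetric] eq)
qed

lemma mvn_trans: "mvn_density m S y = mvn_density m' S (m' + y - m)"
proof -
  have "m' + y - m - m' = y - m" by (simp add: algebra_simps)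
  then show ?thesis unfolding mvn_density_def by simp
qed

lemma matnormal_mgf:
  fixes M :: "'w measure" and J :: "'w \<Rightarrow> real^'q^'d" and Mu T :: "real^'q^'d" and S :: "real^'q^'q"
  assumes P: "prob_space M" and S: "spd S" and D: "distributed M lborel J (matnormal_density Mu S)"
  shows "integrable M (\<lambda>w. exp (J w \<bullet> T))"
    "(\<integral>w. exp (J w \<bullet> T) \<partial>M) = exp (Mu \<bullet> T + (\<Sum>i\<in>UNIV. T$i \<bullet> (S *v T$i)) / 2)"
proof -
  interpret prob_space M by (rule P)
  have Jm[measurable]: "J \<in> borel_measurable M"
    using distributed_measurable[OF D] by simp
  have fm[measurable]: "matnormal_density Mu S \<in> borel_measurable borel"
    using distributed_borel_measurable[OF D] by simp
  have one: "(\<integral>\<^sup>+y. matnormal_density Mu S y \<partial>lborel) = 1"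
    using distributed_nn_integral[OF D, of "\<lambda>_. 1"] by (simp add: emeasure_space_1)
  have eqf: "matnormal_density Mu' S y = matnormal_density Mu S (- (Mu' - Mu) + y)" for y Mu' :: "real^'q^'d"
  proof -
    have "\<And>i. mvn_density (Mu' $ i) S (y $ i) = mvn_density (Mu $ i) S (Mu $ i + y $ i - Mu' $ i)"
      by (rule mvn_trans)
    then show ?thesis unfolding matnormal_density_def by (simp add: algebra_simps)
  qed
  have fm': "matnormal_density Mu' S \<in> borel_measurable borel" for Mu' :: "real^'q^'d"
  proof -
    have "matnormal_density Mu' S = (\<lambda>y. matnormal_density Mu S (- (Mu' - Mu) + y))"
      using eqf by (intro ext) blast
    also have "\<dots> \<in> borel_measurable borel" by measurable
    finally show ?thesis .
  qed
  have shift: "(\<integral>\<^sup>+y. matnormal_density Mu' S y \<partial>lborel) = 1" for Mu' :: "real^'q^'d"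
  proof -
    define c where "c = Mu' - Mu"
    have "(\<integral>\<^sup>+y. matnormal_density Mu S y \<partial>lborel)
        = (\<integral>\<^sup>+y. matnormal_density Mu S y \<partial>distr lborel borel ((+) (- c)))"
      by (simp add: lborel_distr_plus)
    also have "\<dots> = (\<integral>\<^sup>+y. matnormal_density Mu S (- c + y) \<partial>lborel)"
      by (rule nn_integral_distr) auto
    finally show ?thesis using one eqf[of Mu'] unfolding c_def by simp
  qed
  define C where "C = Mu \<bullet> T + (\<Sum>i\<in>UNIV. T$i \<bullet> (S *v T$i)) / 2"
  have em[measurable]: "(\<lambda>y::real^'q^'d. exp (y \<bullet> T)) \<in> borel_measurable borel"
    by (intro borel_measurable_continuous_onI continuous_intros)
  have "(\<integral>\<^sup>+w. ennreal (exp (J w \<bullet> T)) \<partial>M)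
      = (\<integral>\<^sup>+y. matnormal_density Mu S y * ennreal (exp (y \<bullet> T)) \<partial>lborel)"
    by (rule distributed_nn_integral[OF D, symmetric]) simp
  also have "\<dots> = (\<integral>\<^sup>+y. ennreal (exp C) * matnormal_density (Mu + (\<chi> i. S *v T$i)) S y \<partial>lborel)"
    unfolding C_def by (simp add: matnormal_shift[OF S])
  also have "\<dots> = ennreal (exp C)"
    using fm'[of "Mu + (\<chi> i. S *v T$i)"] by (subst nn_integral_cmult) (auto simp: shift)
  finally have nn: "(\<integral>\<^sup>+w. ennreal (exp (J w \<bullet> T)) \<partial>M) = ennreal (exp C)" .
  show "integrable M (\<lambda>w. exp (J w \<bullet> T))"
    by (rule integrableI_nn_integral_finite[OF _ _ nn]) auto
  have "(\<integral>w. exp (J w \<bullet> T) \<partial>M) = enn2real (\<integral>\<^sup>+w. ennreal (exp (J w \<bullet> T)) \<partial>M)"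
    by (rule integral_eq_nn_integral) auto
  then show "(\<integral>w. exp (J w \<bullet> T) \<partial>M) = exp (Mu \<bullet> T + (\<Sum>i\<in>UNIV. T$i \<bullet> (S *v T$i)) / 2)"
    using nn unfolding C_def by simp
qed



lemma matnormal_moments:
  fixes M :: "'w measure" and J :: "'w \<Rightarrow> real^'q^'d" and Mu W0 :: "real^'q^'d" and S :: "real^'q^'q"
  assumes P: "prob_space M" and S: "spd S" and D: "distributed M lborel J (matnormal_density Mu S)"
  defines "a \<equiv> Mu \<bullet> W0" and "b \<equiv> (\<Sum>i\<in>UNIV. W0$i \<bullet> (S *v W0$i))"
  shows "integrable M (\<lambda>w. (J w \<bullet> W0) ^ 2)" "integrable M (\<lambda>w. (J w \<bullet> W0) ^ 4)"
    "(\<integral>w. (J w \<bullet> W0) ^ 2 \<partial>M) = b + a*a"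
    "(\<integral>w. (J w \<bullet> W0) ^ 4 \<partial>M) = a*a*a*a + 6*a*a*b + 3*b*b"
proof -
  have Jm[measurable]: "J \<in> borel_measurable M"
    using distributed_measurable[OF D] by simp
  have Xm: "(\<lambda>w. J w \<bullet> W0) \<in> borel_measurable M" by measurable
  have e: "J w \<bullet> (t *\<^sub>R W0) = t * (J w \<bullet> W0)" for w t by simp
  have mi: "integrable M (\<lambda>w. exp (t * (J w \<bullet> W0)))" for t
    using matnormal_mgf(1)[OF P S D, of "t *\<^sub>R W0"] by (simp only: e)
  have mv: "(\<integral>w. exp (t * (J w \<bullet> W0)) \<partial>M) = exp (t*a + t^2*b/2)" for t
  proof -
    have "(\<Sum>i\<in>UNIV. (t *\<^sub>R W0)$i \<bullet> (S *v (t *\<^sub>R W0)$i)) = t^2 * b"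
      unfolding b_def by (simp add: matrix_vector_mult_scaleR sum_distrib_left power2_eq_square algebra_simps)
    then show ?thesis
      using matnormal_mgf(2)[OF P S D, of "t *\<^sub>R W0"] unfolding a_def by (simp only: e) simp
  qed
  show "integrable M (\<lambda>w. (J w \<bullet> W0) ^ 2)" "integrable M (\<lambda>w. (J w \<bullet> W0) ^ 4)"
    "(\<integral>w. (J w \<bullet> W0) ^ 2 \<partial>M) = b + a*a"
    "(\<integral>w. (J w \<bullet> W0) ^ 4 \<partial>M) = a*a*a*a + 6*a*a*b + 3*b*b"
    using mgf_moments[OF P Xm mi mv] by auto
qed



lemma scaleR_mv: "(c *\<^sub>R (A::real^'n^'m)) *v x = c *\<^sub>R (A *v x)"
  by (simp add: vec_eq_iff matrix_vector_mult_def sum_distrib_left mult.assoc)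

lemma mv_component: "((A::real^'n^'m) *v v) $ i = A $ i \<bullet> v"
  by (simp add: matrix_vector_mult_def inner_vec_def mult.commute)

lemma gmat_quad: "v \<bullet> (Gmat (A::real^'q^'d) *v v) = (\<Sum>i\<in>UNIV. (A$i \<bullet> v)^2)"
proof -
  have "v \<bullet> (Gmat A *v v) = v \<bullet> (transpose A *v (A *v v))"
    unfolding Gmat_def by (simp add: matrix_vector_mul_assoc)
  also have "\<dots> = (A *v v) \<bullet> (A *v v)" by (simp add: inner_mat_left)
  also have "\<dots> = (\<Sum>i\<in>UNIV. (A$i \<bullet> v)^2)"
    by (simp add: inner_vec_def mv_component power2_eq_square)
  finally show ?thesis .
qed

lemma gmat_entry: "Gmat (A::real^'q^'d) \<bullet> axis k (axis l 1) = (\<Sum>i\<in>UNIV. (A \<bullet> axis i (axis k 1)) * (A \<bullet> axis i (axis l 1)))"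
  by (simp add: inner_axis Gmat_def matrix_matrix_mult_def transpose_def cart_eq_inner_axis[symmetric])

lemma integrable_euclidean:
  fixes f :: "'w \<Rightarrow> 'a::euclidean_space"
  assumes "\<And>b. b \<in> Basis \<Longrightarrow> integrable M (\<lambda>w. f w \<bullet> b)"
  shows "integrable M f"
proof -
  have "integrable M (\<lambda>w. \<Sum>b\<in>Basis. (f w \<bullet> b) *\<^sub>R b)"
    using assms by (intro Bochner_Integration.integrable_sum integrable_scaleR_left) auto
  then show ?thesis by (simp add: euclidean_representation)
qed

lemma integrable_prod_sq:
  fixes f g :: "'w \<Rightarrow> real"
  assumes "integrable M (\<lambda>w. f w ^ 2)" "integrable M (\<lambda>w. g w ^ 2)"
    "f \<in> borel_measurable M" "g \<in> borel_measurable M"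
  shows "integrable M (\<lambda>w. f w * g w)"
proof (rule Bochner_Integration.integrable_bound)
  show "integrable M (\<lambda>w. f w ^ 2 + g w ^ 2)" using assms by simp
  show "(\<lambda>w. f w * g w) \<in> borel_measurable M" using assms by measurable
  have "\<bar>f w * g w\<bar> \<le> f w ^ 2 + g w ^ 2" for w
  proof -
    have "2 * (\<bar>f w\<bar> * \<bar>g w\<bar>) \<le> \<bar>f w\<bar>^2 + \<bar>g w\<bar>^2"
      using sum_squares_bound[of "\<bar>f w\<bar>" "\<bar>g w\<bar>"] by (simp add: mult.assoc)
    moreover have "0 \<le> \<bar>f w\<bar> * \<bar>g w\<bar>" by simp
    ultimately have "\<bar>f w\<bar> * \<bar>g w\<bar> \<le> (f w)^2 + (g w)^2" by (simp only: power2_abs)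
    then show ?thesis by (simp add: abs_mult)
  qed
  then show "AE w in M. norm (f w * g w) \<le> norm (f w ^ 2 + g w ^ 2)" by auto
qed

lemma sqrt_up: "0 \<le> w \<Longrightarrow> 0 < R \<Longrightarrow> sqrt w \<le> (w / R + R) / 2"
proof -
  assume w: "0 \<le> w" and R: "0 < R"
  define y where "y = sqrt w"
  have yw: "y * y = w" unfolding y_def using w by simp
  have "0 \<le> (y - R) * (y - R)" by simp
  then have "2 * R * y \<le> w + R * R" using yw by (simp add: algebra_simps)
  then show ?thesis using R w unfolding y_def[symmetric] by (simp add: field_simps)
qed

lemma sqrt_lo: "0 \<le> w \<Longrightarrow> 0 < R \<Longrightarrow> (3 * R^2 * w - w^2) / (2 * R^3) \<le> sqrt w"
proof -
  assume w: "0 \<le> w" and R: "0 < R"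
  define y where "y = sqrt w"
  have y0: "y \<ge> 0" unfolding y_def using w by simp
  have yw: "y * y = w" unfolding y_def using w by simp
  have "0 \<le> y * ((y - R) * (y - R)) * (y + 2 * R)" using y0 R by simp
  then have "3 * R^2 * w - w^2 \<le> y * (2 * R^3)" unfolding yw[symmetric]
    by (simp add: algebra_simps power2_eq_square power3_eq_cube)
  then show ?thesis using R unfolding y_def[symmetric] by (simp add: divide_le_eq mult.commute)
qed



theorem mainTheorem14:
  fixes M :: "'w measure"
    and f :: "real^'q \<Rightarrow> 'w \<Rightarrow> real^'d"
    and J :: "real^'q \<Rightarrow> 'w \<Rightarrow> real^'q^'d"
    and Sigma :: "real^'q \<Rightarrow> real^'q^'q"
    and Mb :: real
  assumes "prob_space M"
    and jac: "\<And>x w. w \<in> space M \<Longrightarrow> ((\<lambda>y. f y w) has_derivative (\<lambda>h. J x w *v h)) (at x)"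
    and spd: "\<And>x. spd (Sigma x)"
    and gauss: "\<And>x. distributed M lborel (J x)
                   (matnormal_density (integral\<^sup>L M (J x)) (Sigma x))"
    and Mb_nonneg: "Mb \<ge> 0"
    and omega_bd: "\<And>x v. v \<noteq> 0 \<Longrightarrow> omega M (J x) (Sigma x) v \<le> Mb * real CARD('d)"
  shows "\<forall>x v. v \<noteq> 0 \<longrightarrow>
           0 \<le> (riem_norm M (J x) v - finsler_norm M (J x) v) / riem_norm M (J x) v \<and>
           (riem_norm M (J x) v - finsler_norm M (J x) v) / riem_norm M (J x) v
             \<le> (1 + Mb) / real CARD('d)"
proof (intro allI impI)
  fix x v :: "real^'q" assume v: "v \<noteq> 0"
  have P: "prob_space M" by fact
  interpret prob_space M by (rule P)
  define S where "S = Sigma x"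
  define Mu where "Mu = integral\<^sup>L M (J x)"
  have spdS: "spd S" unfolding S_def by (rule spd)
  have D: "distributed M lborel (J x) (matnormal_density Mu S)" unfolding S_def Mu_def by (rule gauss)
  have Jm[measurable]: "J x \<in> borel_measurable M" using distributed_measurable[OF D] by simp
  define s where "s = v \<bullet> (S *v v)"
  have s_pos: "s > 0" using spdS v unfolding spd_def s_def by auto
  define Z where "Z i w = J x w $ i \<bullet> v" for i w
  define m where "m i = Mu $ i \<bullet> v" for i
  define E where "E i = ((\<chi> k. if k = i then v else 0) :: real^'q^'d)" for i
  have JE: "J x w \<bullet> E i = Z i w" for i w
    unfolding E_def Z_def inner_vec_def[of "J x w"] by (simp add: if_distrib cong: if_cong)
  have Zm[measurable]: "Z i \<in> borel_measurable M" for i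
  proof -
    have "Z i = (\<lambda>w. J x w \<bullet> E i)" using JE by auto
    also have "\<dots> \<in> borel_measurable M" by measurable
    finally show ?thesis .
  qed
  have MuE: "Mu \<bullet> E i = m i" for i
    unfolding E_def m_def inner_vec_def[of Mu] by (simp add: if_distrib cong: if_cong)
  have bE: "(\<Sum>k\<in>UNIV. E i $ k \<bullet> (S *v E i $ k)) = s" for i
    unfolding E_def s_def by (simp add: if_distrib cong: if_cong)
  have bEp: "(\<Sum>k\<in>UNIV. (E i + E j) $ k \<bullet> (S *v (E i + E j) $ k)) = 2 * s" if ij: "i \<noteq> j" for i j
  proof -
    have "(E i + E j) $ k \<bullet> (S *v (E i + E j) $ k) = (if k = i then s else 0) + (if k = j then s else 0)" for k
      using ij by (cases "k = i"; cases "k = j") (auto simp: E_def s_def)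
    then show ?thesis by (simp add: sum.distrib)
  qed
  have negS: "S *v (- u) = - (S *v u)" for u
    by (simp add: vec_eq_iff matrix_vector_mult_def sum_negf)
  have bEm: "(\<Sum>k\<in>UNIV. (E i - E j) $ k \<bullet> (S *v (E i - E j) $ k)) = 2 * s" if ij: "i \<noteq> j" for i j
  proof -
    have "(E i - E j) $ k \<bullet> (S *v (E i - E j) $ k) = (if k = i then s else 0) + (if k = j then s else 0)" for k
      using ij by (cases "k = i"; cases "k = j") (auto simp: E_def s_def negS)
    then show ?thesis by (simp add: sum.distrib)
  qed
  note mm = matnormal_moments[OF P spdS D]
  have Z2: "integrable M (\<lambda>w. Z i w ^ 2)" "(\<integral>w. Z i w ^ 2 \<partial>M) = s + m i * m i" for i
    using mm(1)[of "E i"] mm(3)[of "E i"] by (simp_all add: JE MuE bE)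
  have Z4: "integrable M (\<lambda>w. Z i w ^ 4)"
     "(\<integral>w. Z i w ^ 4 \<partial>M) = m i * m i * m i * m i + 6 * m i * m i * s + 3 * s * s" for i
    using mm(2)[of "E i"] mm(4)[of "E i"] by (simp_all add: JE MuE bE)
  have Pp: "integrable M (\<lambda>w. (Z i w + Z j w) ^ 4)"
     "(\<integral>w. (Z i w + Z j w) ^ 4 \<partial>M) = (m i + m j) * (m i + m j) * (m i + m j) * (m i + m j)
         + 6 * (m i + m j) * (m i + m j) * (2 * s) + 3 * (2 * s) * (2 * s)" if ij: "i \<noteq> j" for i j
    using mm(2)[of "E i + E j"] mm(4)[of "E i + E j"] bEp[OF ij]
    by (simp_all add: inner_add_right JE MuE)
  have Pm: "integrable M (\<lambda>w. (Z i w - Z j w) ^ 4)"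
     "(\<integral>w. (Z i w - Z j w) ^ 4 \<partial>M) = (m i - m j) * (m i - m j) * (m i - m j) * (m i - m j)
         + 6 * (m i - m j) * (m i - m j) * (2 * s) + 3 * (2 * s) * (2 * s)" if ij: "i \<noteq> j" for i j
    using mm(2)[of "E i - E j"] mm(4)[of "E i - E j"] bEm[OF ij]
    by (simp_all add: inner_diff_right JE MuE)
  show "0 \<le> (riem_norm M (J x) v - finsler_norm M (J x) v) / riem_norm M (J x) v \<and>
           (riem_norm M (J x) v - finsler_norm M (J x) v) / riem_norm M (J x) v
             \<le> (1 + Mb) / real CARD('d)"
  proof -
  have ZZ: "integrable M (\<lambda>w. Z i w ^ 2 * Z j w ^ 2) \<and>
      (\<integral>w. Z i w ^ 2 * Z j w ^ 2 \<partial>M) = (s + m i * m i) * (s + m j * m j)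
        + (if i = j then 4 * m i * m i * s + 2 * s * s else 0)" for i j
  proof (cases "i = j")
    case True
    have e: "Z i w ^ 2 * Z i w ^ 2 = Z i w ^ 4" for w by (simp add: power2_eq_square power4_eq_xxxx)
    show ?thesis using True Z4[of i] unfolding e by (simp add: algebra_simps)
  next
    case False
    have e: "Z i w ^ 2 * Z j w ^ 2 = ((Z i w + Z j w) ^ 4 + (Z i w - Z j w) ^ 4 - 2 * Z i w ^ 4 - 2 * Z j w ^ 4) / 12" for w
      by (simp add: algebra_simps power2_eq_square power4_eq_xxxx)
    have int: "integrable M (\<lambda>w. ((Z i w + Z j w) ^ 4 + (Z i w - Z j w) ^ 4 - 2 * Z i w ^ 4 - 2 * Z j w ^ 4) / 12)"
      using Pp(1)[OF False] Pm(1)[OF False] Z4(1)[of i] Z4(1)[of j] by simp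
    have "(\<integral>w. ((Z i w + Z j w) ^ 4 + (Z i w - Z j w) ^ 4 - 2 * Z i w ^ 4 - 2 * Z j w ^ 4) / 12 \<partial>M)
       = ((\<integral>w. (Z i w + Z j w) ^ 4 \<partial>M) + (\<integral>w. (Z i w - Z j w) ^ 4 \<partial>M) - 2 * (\<integral>w. Z i w ^ 4 \<partial>M) - 2 * (\<integral>w. Z j w ^ 4 \<partial>M)) / 12"
      using Pp(1)[OF False] Pm(1)[OF False] Z4(1)[of i] Z4(1)[of j] by simp
    also have "\<dots> = (s + m i * m i) * (s + m j * m j)"
      unfolding Pp(2)[OF False] Pm(2)[OF False] Z4(2) by (simp add: algebra_simps)
    finally show ?thesis using False int unfolding e by simp
  qed
  define W where "W w = (\<Sum>i\<in>UNIV. Z i w ^ 2)" for w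
  define L where "L = (\<Sum>i\<in>UNIV. m i * m i)"
  define Dn where "Dn = real CARD('d)"
  have Dn_pos: "Dn > 0" unfolding Dn_def by simp
  have Wm[measurable]: "W \<in> borel_measurable M" unfolding W_def by measurable
  have W_nonneg: "W w \<ge> 0" for w unfolding W_def by (simp add: sum_nonneg)
  have Wi: "integrable M W" unfolding W_def using Z2(1) by (intro Bochner_Integration.integrable_sum) auto
  have EW: "(\<integral>w. W w \<partial>M) = Dn * s + L"
  proof -
    have "(\<integral>w. W w \<partial>M) = (\<Sum>i\<in>UNIV. (\<integral>w. Z i w ^ 2 \<partial>M))"
      unfolding W_def using Z2(1) by (intro Bochner_Integration.integral_sum) auto
    also have "\<dots> = (\<Sum>i\<in>UNIV. s + m i * m i)" using Z2(2) by simp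
    also have "\<dots> = Dn * s + L" unfolding L_def Dn_def by (simp add: sum.distrib)
    finally show ?thesis .
  qed
  have W2e: "W w ^ 2 = (\<Sum>i\<in>UNIV. \<Sum>j\<in>UNIV. Z i w ^ 2 * Z j w ^ 2)" for w
    unfolding W_def power2_eq_square[of "sum _ _"] by (simp add: sum_product)
  have W2i: "integrable M (\<lambda>w. W w ^ 2)"
    unfolding W2e using ZZ by (intro Bochner_Integration.integrable_sum) auto
  have EW2: "(\<integral>w. W w ^ 2 \<partial>M) = (Dn * s + L)^2 + 4 * s * L + 2 * Dn * s * s"
  proof -
    have "(\<integral>w. W w ^ 2 \<partial>M) = (\<Sum>i\<in>UNIV. \<Sum>j\<in>UNIV. (\<integral>w. Z i w ^ 2 * Z j w ^ 2 \<partial>M))"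
      unfolding W2e using ZZ
      by (simp add: Bochner_Integration.integral_sum Bochner_Integration.integrable_sum)
    also have "\<dots> = (\<Sum>i\<in>UNIV. \<Sum>j\<in>UNIV. (s + m i * m i) * (s + m j * m j)
        + (if i = j then 4 * m i * m i * s + 2 * s * s else 0))"
      using ZZ by simp
    also have "\<dots> = (\<Sum>i\<in>UNIV. \<Sum>j\<in>UNIV. (s + m i * m i) * (s + m j * m j))
        + (\<Sum>i\<in>UNIV. 4 * m i * m i * s + 2 * s * s)"
      by (simp add: sum.distrib)
    also have "\<dots> = (\<Sum>i\<in>UNIV. s + m i * m i) * (\<Sum>j\<in>UNIV. s + m j * m j)
        + (\<Sum>i\<in>UNIV. 4 * m i * m i * s + 2 * s * s)"
      by (simp only: sum_product)
    also have "\<dots> = (Dn * s + L)^2 + 4 * s * L + 2 * Dn * s * s"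
    proof -
      have A: "(\<Sum>i\<in>UNIV. s + m i * m i) = Dn * s + L" unfolding L_def Dn_def by (simp add: sum.distrib)
      have B: "(\<Sum>i\<in>UNIV. 4 * m i * m i * s + 2 * s * s) = 4 * s * L + 2 * Dn * s * s"
        unfolding L_def Dn_def by (simp add: sum.distrib sum_distrib_left sum_distrib_right algebra_simps)
      show ?thesis unfolding A B by (simp add: power2_eq_square)
    qed
    finally show ?thesis .
  qed
  have Gi: "integrable M (\<lambda>w. Gmat (J x w))"
  proof (rule integrable_euclidean)
    fix b :: "real^'q^'q" assume "b \<in> Basis"
    then obtain k u where b: "b = axis k u" "u \<in> (Basis :: (real^'q) set)" by (auto simp: Basis_vec_def)
    then obtain l where u: "u = axis l (1::real)" by (auto simp: Basis_vec_def)
    have sq: "integrable M (\<lambda>w. (J x w \<bullet> axis i (axis k' 1))^2)" for i k' by (rule mm(1))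
    show "integrable M (\<lambda>w. Gmat (J x w) \<bullet> b)"
      unfolding b u gmat_entry
      by (intro Bochner_Integration.integrable_sum integrable_prod_sq sq) measurable
  qed
  have lin: "bounded_linear (\<lambda>A::real^'q^'q. v \<bullet> (A *v v))"
    unfolding linear_conv_bounded_linear[symmetric]
    by (rule linearI) (simp_all add: matrix_vector_mult_add_rdistrib inner_add_right scaleR_mv)
  have R2: "v \<bullet> (integral\<^sup>L M (\<lambda>w. Gmat (J x w)) *v v) = Dn * s + L"
  proof -
    have "v \<bullet> (integral\<^sup>L M (\<lambda>w. Gmat (J x w)) *v v) = (\<integral>w. v \<bullet> (Gmat (J x w) *v v) \<partial>M)"
      using integral_bounded_linear[OF lin Gi] by simp
    also have "\<dots> = (\<integral>w. W w \<partial>M)" unfolding gmat_quad W_def Z_def ..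
    finally show ?thesis using EW by simp
  qed
  define Q where "Q = Dn * s + L"
  have L0: "L \<ge> 0" unfolding L_def by (simp add: sum_nonneg)
  have Q_pos: "Q > 0" unfolding Q_def using Dn_pos s_pos L0 by (simp add: add_pos_nonneg)
  define R where "R = sqrt Q"
  have R_pos: "R > 0" unfolding R_def using Q_pos by simp
  have RR: "R * R = Q" unfolding R_def using Q_pos by simp
  have riem: "riem_norm M (J x) v = R" unfolding riem_norm_def R2 R_def Q_def ..
  define F where "F = (\<integral>w. sqrt (W w) \<partial>M)"
  have fins: "finsler_norm M (J x) v = F"
    unfolding finsler_norm_def F_def gmat_quad W_def Z_def ..
  have si: "integrable M (\<lambda>w. sqrt (W w))"
  proof (rule Bochner_Integration.integrable_bound)
    show "integrable M (\<lambda>w. W w / 1 + 1)" using Wi by simp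
    show "(\<lambda>w. sqrt (W w)) \<in> borel_measurable M" by measurable
    have "sqrt (W w) \<le> W w / 1 + 1" for w
    proof -
      have "sqrt (W w) \<le> (W w / 1 + 1) / 2" by (rule sqrt_up[OF W_nonneg]) simp
      moreover have "0 \<le> W w" by (rule W_nonneg)
      ultimately show ?thesis by simp
    qed
    then show "AE w in M. norm (sqrt (W w)) \<le> norm (W w / 1 + 1)"
      using W_nonneg by (auto intro!: AE_I2 simp: abs_of_nonneg add_nonneg_nonneg)
  qed
  have Fup: "F \<le> R"
  proof -
    have "F \<le> (\<integral>w. (W w / R + R) / 2 \<partial>M)"
      unfolding F_def using si Wi sqrt_up[OF W_nonneg R_pos] by (intro integral_mono) auto
    also have "\<dots> = (Q / R + R) / 2" using Wi EW unfolding Q_def by (simp add: prob_space)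
    also have "\<dots> = R" using RR R_pos by (simp add: field_simps)
    finally show ?thesis .
  qed
  have Flo: "(3 * R^2 * Q - (Q^2 + 4 * s * L + 2 * Dn * s * s)) / (2 * R^3) \<le> F"
  proof -
    have "(\<integral>w. (3 * R^2 * W w - (W w)^2) / (2 * R^3) \<partial>M) \<le> F"
      unfolding F_def using si Wi W2i sqrt_lo[OF W_nonneg R_pos] by (intro integral_mono) auto
    moreover have "(\<integral>w. (3 * R^2 * W w - (W w)^2) / (2 * R^3) \<partial>M)
       = (3 * R^2 * Q - (Q^2 + 4 * s * L + 2 * Dn * s * s)) / (2 * R^3)"
      using Wi W2i EW EW2 unfolding Q_def by simp
    ultimately show ?thesis by linarith
  qed
  have R4: "R^2 = Q" using RR by (simp add: power2_eq_square)
  have gap: "R - F \<le> (2 * s * L + Dn * s * s) / R^3"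
  proof -
    have "R - F \<le> R - (3 * R^2 * Q - (Q^2 + 4 * s * L + 2 * Dn * s * s)) / (2 * R^3)" using Flo by simp
    also have "\<dots> = (2 * s * L + Dn * s * s) / R^3"
      using R_pos unfolding R4[symmetric] by (simp add: field_simps power2_eq_square power3_eq_cube)
    finally show ?thesis .
  qed
  have ratio: "(R - F) / R \<le> (2 * s * L + Dn * s * s) / (Q * Q)"
  proof -
    have "(R - F) / R \<le> ((2 * s * L + Dn * s * s) / R^3) / R"
      by (rule divide_right_mono[OF gap]) (use R_pos in simp)
    also have "\<dots> = (2 * s * L + Dn * s * s) / (Q * Q)"
      unfolding RR[symmetric] by (simp add: power3_eq_cube mult.assoc)
    finally show ?thesis .
  qed
  have key: "(2 * s * L + Dn * s * s) / (Q * Q) \<le> 1 / Dn"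
  proof -
    have "Dn * (2 * s * L + Dn * s * s) \<le> Q * Q"
      unfolding Q_def by (simp add: algebra_simps)
    then show ?thesis using Dn_pos Q_pos by (simp add: divide_simps mult.commute)
  qed
  have last: "1 / Dn \<le> (1 + Mb) / Dn" using Dn_pos Mb_nonneg by (simp add: divide_right_mono)
  show ?thesis
    unfolding riem fins Dn_def[symmetric]
    using Fup R_pos ratio key last by (auto intro: divide_nonneg_pos)
  qed
qed


end
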